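(* Let $\beta>0$, $x=\tanh\beta$, and let $\sigma$ be distributed according to the Ising measure $\mathbb{I}_{0,\beta}$ on $\{1,\dots,n\}$. For every $r\ge1$ and indices $1\le i_1\le i_2\le\dots\le i_{2r}\le n$, $$\big|\kappa(\sigma(i_1),\dots,\sigma(i_{2r}))\big|\le(2r-2)!\;x^{\,i_{2r}+(i_{2r-1}-i_{2r-2})+(i_{2r-3}-i_{2r-4})+\cdots+(i_3-i_2)-i_1}.$$
   Context: The Ising measure $\mathbb{I}_{0,\beta}$ gives to $\sigma:\{1,\dots,n\}\to\{\pm1\}$ probability proportional to $\exp(\beta\sum_{i=1}^{n-1}\sigma(i)\sigma(i+1))$. The joint cumulant is $\kappa(X_1,\dots,X_s)=\sum_{\Pi}(-1)^{\ell(\Pi)-1}(\ell(\Pi)-1)!\prod_{A\in\Pi}\mathbb{E}[\prod_{j\in A}X_j]$, the sum over set partitions $\Pi$ of $\{1,\dots,s\}$ with $\ell(\Pi)$ blocks. *)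

theory Defs
  imports Complex_Main "HOL-Library.Disjoint_Sets"
begin

definition ising_configs :: "nat \<Rightarrow> (nat \<Rightarrow> int) set" where
  "ising_configs n = PiE {1..n} (\<lambda>_. {-1, 1})"

definition ising_weight :: "real \<Rightarrow> nat \<Rightarrow> (nat \<Rightarrow> int) \<Rightarrow> real" where
  "ising_weight \<beta> n \<sigma> = exp (\<beta> * (\<Sum>i = 1..<n. real_of_int (\<sigma> i * \<sigma> (i + 1))))"

definition ising_partition_fn :: "real \<Rightarrow> nat \<Rightarrow> real" where
  "ising_partition_fn \<beta> n = (\<Sum>\<sigma>\<in>ising_configs n. ising_weight \<beta> n \<sigma>)"

definition ising_expect :: "real \<Rightarrow> nat \<Rightarrow> ((nat \<Rightarrow> int) \<Rightarrow> real) \<Rightarrow> real" where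
  "ising_expect \<beta> n f =
     (\<Sum>\<sigma>\<in>ising_configs n. f \<sigma> * ising_weight \<beta> n \<sigma>) / ising_partition_fn \<beta> n"

definition joint_cumulant :: "(('c \<Rightarrow> real) \<Rightarrow> real) \<Rightarrow> ('c \<Rightarrow> real) list \<Rightarrow> real" where
  "joint_cumulant E Xs =
     (\<Sum>Q\<in>{P. partition_on {0..<length Xs} P}.
        (-1) ^ (card Q - 1) * fact (card Q - 1) *
        (\<Prod>A\<in>Q. E (\<lambda>\<omega>. \<Prod>j\<in>A. (Xs ! j) \<omega>)))"

end

theory Submission
  imports Defs
begin

definition ins_part :: "'a \<Rightarrow> 'a set set \<Rightarrow> 'a set option \<Rightarrow> 'a set set" where
  "ins_part a Q X = (case X of None \<Rightarrow> insert {a} Q | Some A \<Rightarrow> insert (insert a A) (Q - {A}))"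

lemma ins_part_None_part:
  assumes "partition_on S Q" "a \<notin> S"
  shows "partition_on (insert a S) (insert {a} Q)"
  using assms unfolding partition_on_def pairwise_def disjnt_def by auto

lemma ins_part_Some_part:
  assumes "partition_on S Q" "a \<notin> S" "A \<in> Q"
  shows "partition_on (insert a S) (insert (insert a A) (Q - {A}))"
  using assms unfolding partition_on_def pairwise_def disjnt_def
  by (auto; blast)

lemma ins_part_inj:
  assumes "a \<notin> S"
  shows "inj_on (\<lambda>(Q,X). ins_part a Q X) (SIGMA Q:{Q. partition_on S Q}. insert None (Some ` Q))"
proof (rule inj_onI)
  fix p p'
  assume pin: "p \<in> (SIGMA Q:{Q. partition_on S Q}. insert None (Some ` Q))"
    and pin': "p' \<in> (SIGMA Q:{Q. partition_on S Q}. insert None (Some ` Q))"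
    and peq: "(\<lambda>(Q,X). ins_part a Q X) p = (\<lambda>(Q,X). ins_part a Q X) p'"
  obtain Q X where pQ: "p = (Q,X)" by fastforce
  obtain Q' X' where pQ': "p' = (Q',X')" by fastforce
  have Q: "Q \<in> {Q. partition_on S Q}" and X: "X \<in> insert None (Some ` Q)"
    using pin pQ by auto
  have Q': "Q' \<in> {Q. partition_on S Q}" and X': "X' \<in> insert None (Some ` Q')"
    using pin' pQ' by auto
  have eq: "ins_part a Q X = ins_part a Q' X'" using peq pQ pQ' by simp
  have P: "partition_on S Q" "partition_on S Q'" using Q Q' by auto
  have rec: "(\<lambda>B. B - {a}) ` ins_part a Q0 X0 - {{}} = Q0"
    if "partition_on S Q0" "X0 \<in> insert None (Some ` Q0)" for Q0 X0
  proof -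
    have na: "\<And>B. B \<in> Q0 \<Longrightarrow> a \<notin> B" "{} \<notin> Q0" using that assms unfolding partition_on_def by auto
    show ?thesis
    proof (cases X0)
      case None
      show ?thesis unfolding ins_part_def None using na
        by (auto simp: image_iff)
    next
      case (Some A)
      with that have A: "A \<in> Q0" by auto
      show ?thesis unfolding ins_part_def Some using na A
        by (auto simp: image_iff)
    qed
  qed
  have "Q = Q'" using rec[OF P(1) X] rec[OF P(2) X'] eq by simp
  moreover have "X = X'"
  proof -
    have na: "\<And>B. B \<in> Q \<Longrightarrow> a \<notin> B" "{} \<notin> Q" using P(1) assms unfolding partition_on_def by auto
    show ?thesis using X X' eq \<open>Q = Q'\<close> na
      by (cases X; cases X') (auto simp: ins_part_def insert_eq_iff)
  qed
  ultimately show "p = p'" using pQ pQ' by simp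
qed


lemma ins_part_surj:
  assumes "a \<notin> S" "partition_on (insert a S) Q'"
  shows "Q' \<in> (\<lambda>(Q,X). ins_part a Q X) ` (SIGMA Q:{Q. partition_on S Q}. insert None (Some ` Q))"
proof -
  from assms(2) obtain B where B: "B \<in> Q'" "a \<in> B" unfolding partition_on_def by auto
  have disj: "\<And>C. C \<in> Q' \<Longrightarrow> C \<noteq> B \<Longrightarrow> C \<inter> B = {}"
    using assms(2) B unfolding partition_on_def pairwise_def disjnt_def by auto
  have ne: "{} \<notin> Q'" and U: "\<Union>Q' = insert a S" using assms(2) unfolding partition_on_def by auto
  show ?thesis
  proof (cases "B = {a}")
    case True
    have aC: "\<And>C. C \<in> Q' - {B} \<Longrightarrow> a \<notin> C" using disj B by fastforce
    have "\<Union>(Q' - {B}) = S"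
    proof
      show "\<Union>(Q' - {B}) \<subseteq> S"
      proof
        fix x assume "x \<in> \<Union>(Q' - {B})"
        then obtain C where C: "C \<in> Q' - {B}" "x \<in> C" by blast
        then have "a \<notin> C" "C \<in> Q'" using aC by auto
        then show "x \<in> S" using C U by auto
      qed
      show "S \<subseteq> \<Union>(Q' - {B})"
      proof
        fix x assume x: "x \<in> S"
        then obtain C where C: "C \<in> Q'" "x \<in> C" using U by auto
        have "x \<noteq> a" using x assms(1) by auto
        then show "x \<in> \<Union>(Q' - {B})" using C True by (cases "C = B") auto
      qed
    qed
    then have P: "partition_on S (Q' - {B})"
      using assms(2) ne unfolding partition_on_def pairwise_def by auto
    have "ins_part a (Q' - {B}) None = Q'" using True B by (auto simp: ins_part_def)
    then show ?thesis using P by (auto simp: image_iff intro!: bexI[of _ "(Q' - {B}, None)"])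
  next
    case False
    define A where "A = B - {a}"
    have Ane: "A \<noteq> {}" using False B unfolding A_def by auto
    have AnQ: "A \<notin> Q' - {B}" using disj[of A] Ane unfolding A_def by auto
    have aC: "\<And>C. C \<in> Q' - {B} \<Longrightarrow> a \<notin> C" using disj B by fastforce
    have "\<Union>(insert A (Q' - {B})) = S"
    proof
      show "\<Union>(insert A (Q' - {B})) \<subseteq> S"
      proof
        fix x assume "x \<in> \<Union>(insert A (Q' - {B}))"
        then obtain C where C: "C \<in> insert A (Q' - {B})" "x \<in> C" by blast
        show "x \<in> S"
        proof (cases "C = A")
          case True then show ?thesis using C B U unfolding A_def by auto
        next
          case False then have "C \<in> Q'" "a \<notin> C" using C aC by auto
          then show ?thesis using C U by auto
        qed
      qed
      show "S \<subseteq> \<Union>(insert A (Q' - {B}))"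
      proof
        fix x assume x: "x \<in> S"
        then obtain C where C: "C \<in> Q'" "x \<in> C" using U by auto
        have "x \<noteq> a" using x assms(1) by auto
        then show "x \<in> \<Union>(insert A (Q' - {B}))" using C unfolding A_def by (cases "C = B") auto
      qed
    qed
    moreover have "disjoint (insert A (Q' - {B}))"
    proof -
      have d0: "disjoint Q'" using assms(2) unfolding partition_on_def by simp
      then have "disjoint (Q' - {B})" by (rule pairwise_subset) auto
      moreover have "disjnt A C" if "C \<in> Q' - {B}" for C
        using disj[of C] that unfolding A_def disjnt_def by auto
      ultimately show ?thesis by (auto simp: pairwise_insert disjnt_sym)
    qed
    ultimately have P: "partition_on S (insert A (Q' - {B}))"
      using ne Ane unfolding partition_on_def by auto
    have "ins_part a (insert A (Q' - {B})) (Some A) = Q'"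
      using B AnQ unfolding ins_part_def A_def by (auto simp: insert_Diff_if insert_absorb)
    then show ?thesis using P by (auto simp: image_iff intro!: bexI[of _ "(insert A (Q' - {B}), Some A)"])
  qed
qed

lemma ins_part_bij:
  assumes "a \<notin> S"
  shows "bij_betw (\<lambda>(Q,X). ins_part a Q X) (SIGMA Q:{Q. partition_on S Q}. insert None (Some ` Q))
           {Q'. partition_on (insert a S) Q'}"
  unfolding bij_betw_def
proof
  show "inj_on (\<lambda>(Q,X). ins_part a Q X) (SIGMA Q:{Q. partition_on S Q}. insert None (Some ` Q))"
    using ins_part_inj[OF assms] .
  show "(\<lambda>(Q,X). ins_part a Q X) ` (SIGMA Q:{Q. partition_on S Q}. insert None (Some ` Q))
           = {Q'. partition_on (insert a S) Q'}"
  proof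
    show "(\<lambda>(Q,X). ins_part a Q X) ` (SIGMA Q:{Q. partition_on S Q}. insert None (Some ` Q))
           \<subseteq> {Q'. partition_on (insert a S) Q'}"
      using ins_part_None_part[OF _ assms] ins_part_Some_part[OF _ assms]
      by (auto simp: ins_part_def)
    show "{Q'. partition_on (insert a S) Q'} \<subseteq> (\<lambda>(Q,X). ins_part a Q X) ` (SIGMA Q:{Q. partition_on S Q}. insert None (Some ` Q))"
      using ins_part_surj[OF assms] by blast
  qed
qed

lemma sum_partitions_insert:
  assumes "a \<notin> S" "finite S"
  shows "(\<Sum>Q'\<in>{Q'. partition_on (insert a S) Q'}. f Q') =
     (\<Sum>Q\<in>{Q. partition_on S Q}. f (insert {a} Q) + (\<Sum>A\<in>Q. f (insert (insert a A) (Q - {A}))))"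
proof -
  have fin: "finite {Q. partition_on S Q}" using finitely_many_partition_on[OF assms(2)] .
  have finQ: "\<And>Q. partition_on S Q \<Longrightarrow> finite Q" using finite_elements[OF assms(2)] .
  have "(\<Sum>Q'\<in>{Q'. partition_on (insert a S) Q'}. f Q') =
        (\<Sum>p\<in>(SIGMA Q:{Q. partition_on S Q}. insert None (Some ` Q)). f ((\<lambda>(Q,X). ins_part a Q X) p))"
    using sum.reindex_bij_betw[OF ins_part_bij[OF assms(1)], of f] by simp
  also have "\<dots> = (\<Sum>Q\<in>{Q. partition_on S Q}. \<Sum>X\<in>insert None (Some ` Q). f (ins_part a Q X))"
    using sum.Sigma[OF fin, of "\<lambda>Q. insert None (Some ` Q)" "\<lambda>Q X. f (ins_part a Q X)"] fin finQ
    by (simp add: case_prod_unfold)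
  also have "\<dots> = (\<Sum>Q\<in>{Q. partition_on S Q}. f (insert {a} Q) + (\<Sum>A\<in>Q. f (insert (insert a A) (Q - {A}))))"
  proof (rule sum.cong[OF refl])
    fix Q assume "Q \<in> {Q. partition_on S Q}"
    then have "finite Q" using finQ by auto
    then show "(\<Sum>X\<in>insert None (Some ` Q). f (ins_part a Q X)) =
        f (insert {a} Q) + (\<Sum>A\<in>Q. f (insert (insert a A) (Q - {A})))"
      by (simp add: sum.reindex ins_part_def)
  qed
  finally show ?thesis .
qed

definition ind :: "nat \<Rightarrow> nat set \<Rightarrow> nat" where
  "ind j A = (if odd (card (A \<inter> {..<j})) then 1 else 0)"
definition oc :: "nat \<Rightarrow> nat set set \<Rightarrow> nat" where
  "oc j Q = (\<Sum>A\<in>Q. ind j A)"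
definition mu :: "nat set set \<Rightarrow> real" where
  "mu Q = (-1) ^ (card Q - 1) * fact (card Q - 1)"
definition Wt :: "(nat \<Rightarrow> real) \<Rightarrow> nat \<Rightarrow> nat set set \<Rightarrow> real" where
  "Wt y m Q = (\<Prod>j\<in>{1..<m}. y j ^ oc j Q)"
definition Hf :: "(nat \<Rightarrow> real) \<Rightarrow> nat \<Rightarrow> nat \<Rightarrow> real" where
  "Hf y m q = (\<Sum>Q\<in>{Q. partition_on {..<m} Q}. if oc m Q = q then mu Q * Wt y m Q else 0)"

lemma part_facts:
  fixes m :: nat
  assumes "partition_on {..<m} Q"
  shows "finite Q" "\<And>A. A \<in> Q \<Longrightarrow> A \<subseteq> {..<m}" "\<And>A. A \<in> Q \<Longrightarrow> finite A"
    "\<And>A. A \<in> Q \<Longrightarrow> m \<notin> A" "{m} \<notin> Q" "m \<ge> 1 \<Longrightarrow> card Q \<ge> 1"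
proof -
  show fQ: "finite Q" by (rule finite_elements[OF finite_lessThan assms])
  show sub: "\<And>A. A \<in> Q \<Longrightarrow> A \<subseteq> {..<m}" using assms unfolding partition_on_def by auto
  then show "\<And>A. A \<in> Q \<Longrightarrow> finite A" using finite_subset by blast
  show "\<And>A. A \<in> Q \<Longrightarrow> m \<notin> A" using sub by blast
  show "{m} \<notin> Q" using sub by blast
  show "m \<ge> 1 \<Longrightarrow> card Q \<ge> 1"
  proof -
    assume "m \<ge> 1"
    then have "0 \<in> {..<m}" by simp
    then have "Q \<noteq> {}" using assms unfolding partition_on_def by auto
    then show "card Q \<ge> 1" using fQ by (simp add: Suc_le_eq card_gt_0_iff)
  qed
qed

lemma ind_insert_le: "A \<subseteq> {..<m} \<Longrightarrow> j \<le> m \<Longrightarrow> ind j (insert m A) = ind j A"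
  unfolding ind_def by (simp add: Int_insert_left)

lemma ind_Suc_insert: "A \<subseteq> {..<m} \<Longrightarrow> finite A \<Longrightarrow> ind (Suc m) (insert m A) = (if odd (card A) then 0 else 1)"
proof -
  assume a: "A \<subseteq> {..<m}" "finite A"
  have "insert m A \<inter> {..<Suc m} = insert m A" using a by auto
  moreover have "m \<notin> A" using a by auto
  ultimately show ?thesis unfolding ind_def using a by simp
qed

lemma ind_sub: "A \<subseteq> {..<m} \<Longrightarrow> m \<le> j \<Longrightarrow> ind j A = (if odd (card A) then 1 else 0)"
proof -
  assume "A \<subseteq> {..<m}" "m \<le> j"
  then have "A \<inter> {..<j} = A" by auto
  then show ?thesis unfolding ind_def by simp
qed

lemma ind_single: "ind j {m} = (if m < j then 1 else 0)"
  unfolding ind_def by auto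

lemma oc_sub: "partition_on {..<m} Q \<Longrightarrow> m \<le> j \<Longrightarrow> oc j Q = oc m Q"
  unfolding oc_def
proof (intro sum.cong refl)
  fix A assume P: "partition_on {..<m} Q" and j: "m \<le> j" and A: "A \<in> Q"
  show "ind j A = ind m A" using ind_sub[OF part_facts(2)[OF P A] j] ind_sub[OF part_facts(2)[OF P A], of m] by simp
qed

lemma oc_count: "partition_on {..<m} Q \<Longrightarrow>
   (\<Sum>A\<in>Q. (if odd (card A) then c1 else c2)) = real (oc m Q) * c1 + (real (card Q) - real (oc m Q)) * (c2::real)"
proof -
  assume P: "partition_on {..<m} Q"
  have "(\<Sum>A\<in>Q. (if odd (card A) then c1 else c2)) = (\<Sum>A\<in>Q. real (ind m A) * c1 + (1 - real (ind m A)) * c2)"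
    using ind_sub[OF part_facts(2)[OF P]] by (intro sum.cong) auto
  also have "\<dots> = real (oc m Q) * c1 + (real (card Q) - real (oc m Q)) * c2"
    unfolding oc_def by (simp add: sum.distrib sum_distrib_right sum_subtractf left_diff_distrib)
  finally show ?thesis .
qed


lemma Q1_facts:
  assumes P: "partition_on {..<m} Q" and m: "m \<ge> 1"
  shows "oc (Suc m) (insert {m} Q) = oc m Q + 1"
    "mu (insert {m} Q) = - real (card Q) * mu Q"
    "Wt y (Suc m) (insert {m} Q) = Wt y m Q * y m ^ oc m Q"
proof -
  note pf = part_facts[OF P]
  have oc1: "oc j (insert {m} Q) = ind j {m} + oc j Q" for j
    unfolding oc_def using pf(1,5) by simp
  show "oc (Suc m) (insert {m} Q) = oc m Q + 1"
    using oc1[of "Suc m"] oc_sub[OF P, of "Suc m"] by (simp add: ind_single)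
  have c: "card (insert {m} Q) = Suc (card Q)" using pf(1,5) by simp
  obtain c0 where c0: "card Q = Suc c0" using pf(6)[OF m] by (cases "card Q") auto
  show "mu (insert {m} Q) = - real (card Q) * mu Q"
    unfolding mu_def c c0 by (simp add: algebra_simps)
  have "Wt y (Suc m) (insert {m} Q) = Wt y m (insert {m} Q) * y m ^ oc m (insert {m} Q)"
    unfolding Wt_def using m by (simp add: prod.atLeastLessThan_Suc)
  also have "Wt y m (insert {m} Q) = Wt y m Q"
    unfolding Wt_def by (intro prod.cong refl) (simp add: oc1 ind_single)
  also have "oc m (insert {m} Q) = oc m Q" by (simp add: oc1 ind_single)
  finally show "Wt y (Suc m) (insert {m} Q) = Wt y m Q * y m ^ oc m Q" .
qed

lemma Q2_facts:
  assumes P: "partition_on {..<m} Q" and m: "m \<ge> 1" and A: "A \<in> Q"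
  shows "oc (Suc m) (insert (insert m A) (Q - {A})) = (if odd (card A) then oc m Q - 1 else oc m Q + 1)"
    "mu (insert (insert m A) (Q - {A})) = mu Q"
    "Wt y (Suc m) (insert (insert m A) (Q - {A})) = Wt y m Q * y m ^ oc m Q"
proof -
  note pf = part_facts[OF P]
  have nin: "insert m A \<notin> Q - {A}" using pf(4) by blast
  have oc2: "oc j (insert (insert m A) (Q - {A})) = ind j (insert m A) + oc j (Q - {A})" for j
    unfolding oc_def using pf(1) nin by simp
  have ocQ: "oc j Q = ind j A + oc j (Q - {A})" for j
    unfolding oc_def using pf(1) A by (simp add: sum.remove)
  have le: "j \<le> m \<Longrightarrow> oc j (insert (insert m A) (Q - {A})) = oc j Q" for j
    using oc2 ocQ ind_insert_le[OF pf(2)[OF A]] by simp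
  have "oc (Suc m) (insert (insert m A) (Q - {A})) + ind (Suc m) A = oc (Suc m) Q + ind (Suc m) (insert m A)"
    using oc2 ocQ by simp
  then show "oc (Suc m) (insert (insert m A) (Q - {A})) = (if odd (card A) then oc m Q - 1 else oc m Q + 1)"
    using ind_Suc_insert[OF pf(2,3)[OF A]] ind_sub[OF pf(2)[OF A], of "Suc m"] oc_sub[OF P, of "Suc m"]
    by (auto split: if_splits)
  have c: "card (insert (insert m A) (Q - {A})) = card Q"
    using pf(1) nin A pf(6)[OF m] by (simp add: card_Diff_singleton)
  show "mu (insert (insert m A) (Q - {A})) = mu Q" unfolding mu_def c ..
  have "Wt y (Suc m) (insert (insert m A) (Q - {A})) = Wt y m (insert (insert m A) (Q - {A})) * y m ^ oc m (insert (insert m A) (Q - {A}))"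
    unfolding Wt_def using m by (simp add: prod.atLeastLessThan_Suc)
  also have "Wt y m (insert (insert m A) (Q - {A})) = Wt y m Q"
    unfolding Wt_def by (intro prod.cong refl) (simp add: le)
  also have "oc m (insert (insert m A) (Q - {A})) = oc m Q" by (simp add: le)
  finally show "Wt y (Suc m) (insert (insert m A) (Q - {A})) = Wt y m Q * y m ^ oc m Q" .
qed

lemma Hf_rec:
  assumes m: "m \<ge> 1"
  shows "Hf y (Suc m) q = real (q+1) * y m ^ (q+1) * Hf y m (q+1)
          - (if q \<ge> 1 then real (q-1) * y m ^ (q-1) * Hf y m (q-1) else 0)"
proof -
  define F where "F Q' = (if oc (Suc m) Q' = q then mu Q' * Wt y (Suc m) Q' else 0)" for Q'
  have "Hf y (Suc m) q = (\<Sum>Q'\<in>{Q'. partition_on (insert m {..<m}) Q'}. F Q')"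
    unfolding Hf_def F_def by (simp add: lessThan_Suc)
  also have "\<dots> = (\<Sum>Q\<in>{Q. partition_on {..<m} Q}. F (insert {m} Q) + (\<Sum>A\<in>Q. F (insert (insert m A) (Q - {A}))))"
    by (rule sum_partitions_insert) auto
  also have "\<dots> = (\<Sum>Q\<in>{Q. partition_on {..<m} Q}.
      real (q+1) * y m ^ (q+1) * (if oc m Q = q+1 then mu Q * Wt y m Q else 0)
      - (if q \<ge> 1 then real (q-1) * y m ^ (q-1) * (if oc m Q = q-1 then mu Q * Wt y m Q else 0) else 0))"
  proof (rule sum.cong[OF refl])
    fix Q assume "Q \<in> {Q. partition_on {..<m} Q}"
    then have P: "partition_on {..<m} Q" by simp
    define k where "k = oc m Q"
    define w where "w = mu Q * Wt y m Q * y m ^ k"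
    define X where "X = (if k - 1 = q then w else 0)"
    define Y where "Y = (if k + 1 = q then w else 0)"
    have f1: "F (insert {m} Q) = - real (card Q) * Y"
      unfolding F_def Q1_facts[OF P m] k_def Y_def w_def by simp
    have "(\<Sum>A\<in>Q. F (insert (insert m A) (Q - {A}))) =
        (\<Sum>A\<in>Q. if odd (card A) then X else Y)"
      unfolding F_def using Q2_facts[OF P m] unfolding k_def w_def X_def Y_def by (intro sum.cong refl) auto
    also have "\<dots> = real k * X + (real (card Q) - real k) * Y"
      unfolding k_def by (rule oc_count[OF P])
    finally have "F (insert {m} Q) + (\<Sum>A\<in>Q. F (insert (insert m A) (Q - {A}))) =
       real k * X - real k * Y" using f1 by (simp add: algebra_simps)
    also have "\<dots> = real k * (if k - 1 = q then w else 0) - real k * (if k + 1 = q then w else 0)"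
      unfolding X_def Y_def ..
    also have "\<dots> = real (q+1) * y m ^ (q+1) * (if k = q+1 then mu Q * Wt y m Q else 0)
      - (if q \<ge> 1 then real (q-1) * y m ^ (q-1) * (if k = q-1 then mu Q * Wt y m Q else 0) else 0)"
      unfolding w_def by (cases k) auto
    finally show "F (insert {m} Q) + (\<Sum>A\<in>Q. F (insert (insert m A) (Q - {A}))) =
      real (q+1) * y m ^ (q+1) * (if oc m Q = q+1 then mu Q * Wt y m Q else 0)
      - (if q \<ge> 1 then real (q-1) * y m ^ (q-1) * (if oc m Q = q-1 then mu Q * Wt y m Q else 0) else 0)"
      unfolding k_def .
  qed
  also have "\<dots> = real (q+1) * y m ^ (q+1) * Hf y m (q+1)
          - (if q \<ge> 1 then real (q-1) * y m ^ (q-1) * Hf y m (q-1) else 0)"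
    unfolding Hf_def by (simp add: sum_subtractf sum_distrib_left)
  finally show ?thesis .
qed

lemma partitions_one: "{Q. partition_on {..<Suc 0} Q} = {{{0}}}"
proof -
  have "Q = {{0}}" if "partition_on {0::nat} Q" for Q
  proof -
    have U: "\<Union>Q = {0}" and ne: "{} \<notin> Q" using that unfolding partition_on_def by auto
    have "A = {0}" if A: "A \<in> Q" for A
    proof -
      have "A \<subseteq> {0}" using U A by auto
      moreover have "A \<noteq> {}" using ne A by auto
      ultimately show ?thesis by auto
    qed
    then have "Q \<subseteq> {{0}}" by auto
    moreover have "Q \<noteq> {}" using U by auto
    ultimately show ?thesis by (metis subset_singletonD)
  qed
  moreover have "partition_on {0::nat} {{0}}" by (rule partition_on_space) simp
  moreover have e: "{..<Suc 0} = {0::nat}" by auto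
  ultimately show ?thesis unfolding e by blast
qed

lemma Hf_one: "Hf y (Suc 0) q = (if q = 1 then 1 else 0)"
proof -
  have o: "oc (Suc 0) {{0}} = 1" unfolding oc_def ind_def by simp
  have "mu {{0}} = 1" unfolding mu_def by simp
  moreover have "Wt y (Suc 0) {{0}} = 1" unfolding Wt_def by simp
  ultimately show ?thesis unfolding Hf_def partitions_one using o by simp
qed

lemma Hf_vanish: "m \<ge> 1 \<Longrightarrow> (q > m \<or> odd (m + q)) \<Longrightarrow> Hf y m q = 0"
proof (induction m arbitrary: q)
  case 0 then show ?case by simp
next
  case (Suc m)
  show ?case
  proof (cases "m = 0")
    case True then show ?thesis using Suc.prems by (auto simp: Hf_one)
  next
    case False
    then have m: "m \<ge> 1" by simp
    have c1: "q + 1 > m \<or> odd (m + (q+1))" using Suc.prems(2) by presburger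
    have "Hf y m (q+1) = 0" by (rule Suc.IH[OF m c1])
    moreover have "Hf y m (q-1) = 0" if q1: "q \<ge> 1"
    proof -
      have c2: "q - 1 > m \<or> odd (m + (q-1))" using Suc.prems(2) q1 by presburger
      show ?thesis by (rule Suc.IH[OF m c2])
    qed
    ultimately show ?thesis unfolding Hf_rec[OF m] by simp
  qed
qed

fun Nb :: "nat \<Rightarrow> nat \<Rightarrow> nat" where
  "Nb 0 q = (if q = 1 then 1 else 0)"
| "Nb (Suc k) q = Nb k (q+1) + (if q \<ge> 2 then Nb k (q-1) else 0)"

definition bexp :: "nat \<Rightarrow> nat" where "bexp j = (if odd j then 1 else 2)"

definition Pm :: "(nat \<Rightarrow> real) \<Rightarrow> nat \<Rightarrow> nat \<Rightarrow> real" where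
  "Pm y r m = (\<Prod>j\<in>{1..<m}. real (min j (2*r-j)) * y j ^ bexp j)"

lemma Pm_nonneg: "(\<And>j. 0 \<le> y j) \<Longrightarrow> 0 \<le> Pm y r m"
  unfolding Pm_def by (intro prod_nonneg) auto

lemma Hf_bound:
  assumes y0: "\<And>j. 0 \<le> y j" and y1: "\<And>j. y j \<le> 1"
  shows "m \<ge> 1 \<Longrightarrow> q \<ge> 1 \<Longrightarrow> q + m \<le> 2*r \<Longrightarrow> \<bar>Hf y m q\<bar> \<le> real (Nb (m-1) q) * Pm y r m"
proof (induction m arbitrary: q)
  case 0 then show ?case by simp
next
  case (Suc m)
  show ?case
  proof (cases "m = 0")
    case True then show ?thesis by (simp add: Hf_one Pm_def)
  next
    case False
    then have m: "m \<ge> 1" by simp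
    define w where "w = real (min m (2*r-m)) * y m ^ bexp m"
    have PmS: "Pm y r (Suc m) = Pm y r m * w"
      unfolding Pm_def w_def using m by (simp add: prod.atLeastLessThan_Suc)
    have Pm0: "0 \<le> Pm y r m" by (rule Pm_nonneg[OF y0])
    have key: "real p * y m ^ p * \<bar>Hf y m p\<bar> \<le> real (Nb (m-1) p) * Pm y r m * w"
      if p1: "p \<ge> 1" and p2: "p + m \<le> 2*r" for p
    proof (cases "Hf y m p = 0")
      case True then show ?thesis using Pm0 y0 by (simp add: w_def)
    next
      case False
      have pm: "p \<le> m" using Hf_vanish[OF m, of p y] False by (meson not_le)
      have par: "even (m + p)" using Hf_vanish[OF m, of p y] False by blast
      have "bexp m \<le> p" using p1 par unfolding bexp_def by presburger
      then have yp: "y m ^ p \<le> y m ^ bexp m" by (rule power_decreasing[OF _ y0 y1])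
      have pmin: "real p \<le> real (min m (2*r-m))" using pm p2 by simp
      have IH: "\<bar>Hf y m p\<bar> \<le> real (Nb (m-1) p) * Pm y r m" using Suc.IH[OF m p1 p2] .
      have "real p * y m ^ p * \<bar>Hf y m p\<bar> \<le> real (min m (2*r-m)) * y m ^ bexp m * (real (Nb (m-1) p) * Pm y r m)"
        by (intro mult_mono yp pmin IH) (auto simp: y0 Pm0)
      then show ?thesis by (simp add: w_def algebra_simps)
    qed
    have t1: "real (q+1) * y m ^ (q+1) * \<bar>Hf y m (q+1)\<bar> \<le> real (Nb (m-1) (q+1)) * Pm y r m * w"
      using key[of "q+1"] Suc.prems by simp
    have t2: "(if q \<ge> 2 then real (q-1) * y m ^ (q-1) * \<bar>Hf y m (q-1)\<bar> else 0)
        \<le> (if q \<ge> 2 then real (Nb (m-1) (q-1)) else 0) * Pm y r m * w"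
    proof (cases "q \<ge> 2")
      case True then show ?thesis using key[of "q-1"] Suc.prems by simp
    qed simp
    have "\<bar>Hf y (Suc m) q\<bar> \<le> \<bar>real (q+1) * y m ^ (q+1) * Hf y m (q+1)\<bar>
        + \<bar>if q \<ge> 1 then real (q-1) * y m ^ (q-1) * Hf y m (q-1) else 0\<bar>"
      unfolding Hf_rec[OF m] by (rule abs_triangle_ineq4)
    also have "\<bar>real (q+1) * y m ^ (q+1) * Hf y m (q+1)\<bar>
        + \<bar>if q \<ge> 1 then real (q-1) * y m ^ (q-1) * Hf y m (q-1) else 0\<bar>
       = real (q+1) * y m ^ (q+1) * \<bar>Hf y m (q+1)\<bar> +
         (if q \<ge> 2 then real (q-1) * y m ^ (q-1) * \<bar>Hf y m (q-1)\<bar> else 0)"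
    proof (cases "q \<ge> 2")
      case True then show ?thesis by (simp add: abs_mult y0)
    next
      case False then have "q = 1" using Suc.prems by simp
      then show ?thesis by (simp add: abs_mult y0)
    qed
    also have "\<dots> \<le> real (Nb (m-1) (q+1)) * Pm y r m * w + (if q \<ge> 2 then real (Nb (m-1) (q-1)) else 0) * Pm y r m * w"
      by (rule add_mono[OF t1 t2])
    also have "\<dots> = (real (Nb (m-1) (q+1)) + (if q \<ge> 2 then real (Nb (m-1) (q-1)) else 0)) * Pm y r m * w"
      by (simp add: distrib_right)
    also have "\<dots> = real (Nb (Suc m - 1) q) * Pm y r (Suc m)"
    proof -
      obtain m' where m': "m = Suc m'" using m by (cases m) auto
      show ?thesis using PmS by (simp add: m' algebra_simps)
    qed
    finally show ?thesis .
  qed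
qed

lemma Nb_big: "q > k + 1 \<Longrightarrow> Nb k q = 0"
  by (induction k arbitrary: q) auto

declare Nb.simps(2)[simp del]

lemma pascal': "Suc n choose d = (if d > 0 then n choose (d-1) else 0) + (n choose d)"
  by (cases d) auto

lemma Nb_ballot:
  "d \<le> u \<Longrightarrow> Nb (u+d) (Suc u - d) + (if d > 0 then (u+d) choose (d-1) else 0) = (u+d) choose d"
proof (induction "u+d" arbitrary: u d)
  case 0 then show ?case by simp
next
  case (Suc n)
  show ?case
  proof (cases "d = 0")
    case True
    then have u: "u = Suc n" using Suc.hyps by simp
    have IH: "Nb n (Suc n) = 1" using Suc.hyps(1)[of n 0] by simp
    have "Nb n (Suc (Suc u)) = 0" by (rule Nb_big) (simp add: u)
    then show ?thesis using IH u True by (simp add: Nb.simps(2))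
  next
    case False
    then obtain d' where dS: "d = Suc d'" by (cases d) auto
    have ud: "u + d = Suc n" using Suc.hyps(2) by simp
    have d1: "d - 1 = d'" using dS by simp
    have Pas: "Suc n choose Suc d' = (n choose d') + (n choose Suc d')" by (rule binomial_Suc_Suc)
    have Pas2: "Suc n choose d' = (if d' > 0 then n choose (d'-1) else 0) + (n choose d')" by (rule pascal')
    show ?thesis
    proof (cases "u = d")
      case True
      have n: "n = u + d'" using Suc.hyps(2) dS by simp
      have IH: "Nb n (Suc u - d') + (if d' > 0 then n choose (d'-1) else 0) = n choose d'"
      proof -
        have "d' \<le> u" using True dS by simp
        from Suc.hyps(1)[OF n this] show ?thesis unfolding n .
      qed
      have e2: "Suc u - d' = 2" using True dS by simp
      have sym: "n choose d' = n choose (Suc d')"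
        using binomial_symmetric[of d' n] n True dS by simp
      have e: "Nb (Suc n) (Suc u - d) = Nb n 2" using True by (simp add: numeral_2_eq_2 Nb.simps(2))
      have "Nb n 2 + (Suc n choose d') = Suc n choose Suc d'"
        using IH e2 sym Pas Pas2 by simp
      then show ?thesis using e ud d1 dS by simp
    next
      case False
      then have lt: "d < u" using Suc.prems by simp
      have n: "n = u + d'" using Suc.hyps(2) dS by simp
      have IH1: "Nb n (Suc u - d') + (if d' > 0 then n choose (d'-1) else 0) = n choose d'"
      proof -
        have "d' \<le> u" using lt dS by simp
        from Suc.hyps(1)[OF n this] show ?thesis unfolding n .
      qed
      have IH2: "Nb n (Suc (u-1) - d) + (n choose d') = n choose (Suc d')"
      proof -
        have n': "n = (u-1) + d" using n dS lt by simp
        have "d \<le> u - 1" using lt by simp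
        from Suc.hyps(1)[OF n' this] show ?thesis unfolding n' using dS by simp
      qed
      have e1: "Suc u - d' = Suc (Suc u - d)" using dS lt by simp
      have e2: "Suc (u-1) - d = Suc u - d - 1" using lt by simp
      have e: "Nb (Suc n) (Suc u - d) = Nb n (Suc (Suc u - d)) + Nb n (Suc u - d - 1)"
      proof -
        have "2 \<le> Suc u - d" using lt by simp
        then show ?thesis by (simp add: Nb.simps(2))
      qed
      have "Nb n (Suc (Suc u - d)) + Nb n (Suc u - d - 1) + (Suc n choose d') = Suc n choose Suc d'"
        using IH1 IH2 e1 e2 Pas Pas2 by simp
      then show ?thesis using e ud d1 dS by simp
    qed
  qed
qed

lemma prod_rev_fact: "a \<le> b \<Longrightarrow> (\<Prod>j\<in>{a..<b}. b + 1 - j) = fact (b + 1 - a)"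
proof (induction "b - a" arbitrary: a)
  case 0 then show ?case by simp
next
  case (Suc k)
  then have ab: "a < b" by simp
  have "(\<Prod>j\<in>{a..<b}. b + 1 - j) = (b + 1 - a) * (\<Prod>j\<in>{Suc a..<b}. b + 1 - j)"
    by (rule prod.atLeast_Suc_lessThan[OF ab])
  also have "(\<Prod>j\<in>{Suc a..<b}. b + 1 - j) = fact (b + 1 - Suc a)"
    using Suc.hyps(1)[of "Suc a"] Suc.hyps(2) ab by simp
  also have "(b + 1 - a) * fact (b + 1 - Suc a) = (fact (b + 1 - a) :: nat)"
    using ab by (simp add: Suc_diff_le)
  finally show ?case .
qed

lemma prod_min: "r \<ge> 1 \<Longrightarrow> (\<Prod>j\<in>{1..<2*r-1}. min j (2*r-j)) = fact r * fact (r-1)"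
proof -
  assume r: "r \<ge> 1"
  show ?thesis
  proof (cases "r = 1")
    case True then show ?thesis by simp
  next
    case False
    then have r2: "r \<ge> 2" using r by simp
    have "(\<Prod>j\<in>{1..<2*r-1}. min j (2*r-j)) = (\<Prod>j\<in>{1..<r+1}. min j (2*r-j)) * (\<Prod>j\<in>{r+1..<2*r-1}. min j (2*r-j))"
      using r2 by (intro prod.atLeastLessThan_concat[symmetric]) auto
    also have "(\<Prod>j\<in>{1..<r+1}. min j (2*r-j)) = (\<Prod>j\<in>{1..r}. j)"
      by (intro prod.cong) auto
    also have "\<dots> = fact r" by (simp add: fact_prod)
    also have "(\<Prod>j\<in>{r+1..<2*r-1}. min j (2*r-j)) = (\<Prod>j\<in>{r+1..<2*r-1}. (2*r-1) + 1 - j)"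
      by (intro prod.cong) auto
    also have "\<dots> = fact (2*r-1 + 1 - (r+1))" using r2 by (intro prod_rev_fact) auto
    also have "2*r-1 + 1 - (r+1) = r - 1" using r2 by simp
    finally show ?thesis .
  qed
qed

lemma comb_final: "r \<ge> 1 \<Longrightarrow> Nb (2*r-2) 1 * fact r * fact (r-1) = (fact (2*r-2) :: nat)"
proof -
  assume r: "r \<ge> 1"
  show ?thesis
  proof (cases "r = 1")
    case True
    have "Nb 0 1 = 1" by (simp add: Nb.simps(1))
    moreover have "2*r-2 = 0" "r - 1 = 0" "fact r = (1::nat)" using True by simp_all
    ultimately show ?thesis by simp
  next
    case False
    define s where "s = r - 2"
    have s: "r = s + 2" using r False unfolding s_def by simp
    have B0: "Nb ((s+1)+(s+1)) (Suc (s+1) - (s+1)) + (if s+1 > 0 then ((s+1)+(s+1)) choose (s+1-1) else 0)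
      = ((s+1)+(s+1)) choose (s+1)"
      by (rule Nb_ballot) simp
    have e1: "(s+1)+(s+1) = 2*s+2" and e2: "Suc (s+1) - (s+1) = 1" and e3: "s+1-1 = s" by simp_all
    have B': "Nb (2*s+2) 1 + ((2*s+2) choose s) = (2*s+2) choose (s+1)"
      using B0 unfolding e1 e2 e3 by simp
    define N where "N = Nb (2*s+2) 1"
    define A where "A = (2*s+2) choose (s+1)"
    define Bc where "Bc = (2*s+2) choose s"
    define F where "F = (fact (2*s+2) :: nat)"
    define f0 where "f0 = (fact s :: nat)"
    define f1 where "f1 = (fact (s+1) :: nat)"
    define f2 where "f2 = (fact (s+2) :: nat)"
    have F1: "f1 * f1 * A = F"
    proof -
      have "fact (s+1) * fact (2*s+2 - (s+1)) * ((2*s+2) choose (s+1)) = (fact (2*s+2) :: nat)"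
        by (rule binomial_fact_lemma) simp
      moreover have "2*s+2 - (s+1) = s+1" by simp
      ultimately show ?thesis unfolding f1_def A_def F_def by metis
    qed
    have F2: "f0 * f2 * Bc = F"
    proof -
      have "fact s * fact (2*s+2 - s) * ((2*s+2) choose s) = (fact (2*s+2) :: nat)"
        by (rule binomial_fact_lemma) simp
      moreover have "2*s+2 - s = s+2" by simp
      ultimately show ?thesis unfolding f0_def f2_def Bc_def F_def by metis
    qed
    have ff2: "f2 = (s+2) * f1"
    proof -
      have "s+2 = Suc (s+1)" by simp
      then have "f2 = fact (Suc (s+1))" unfolding f2_def by simp
      also have "\<dots> = Suc (s+1) * fact (s+1)" by (metis fact_Suc of_nat_id)
      finally show ?thesis unfolding f1_def by simp
    qed
    have ff1: "f1 = (s+1) * f0"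
    proof -
      have "f1 = fact (Suc s)" unfolding f1_def by simp
      also have "\<dots> = Suc s * fact s" by (metis fact_Suc of_nat_id)
      finally show ?thesis unfolding f0_def by simp
    qed
    have NBA: "N + Bc = A" using B' unfolding N_def A_def Bc_def .
    have "(N + Bc) * (f2 * f1) = A * (f2 * f1)" using NBA by simp
    then have h1: "N * (f2 * f1) + Bc * (f2 * f1) = A * (f2 * f1)" by (simp only: distrib_right)
    have h2: "A * (f2 * f1) = (s+2) * F" unfolding ff2 F1[symmetric] by (simp only: ac_simps)
    have h3: "Bc * (f2 * f1) = (s+1) * F" unfolding ff1 F2[symmetric] ff2 by (simp only: ac_simps)
    have "N * (f2 * f1) = F" using h1 h2 h3 by simp
    moreover have "2*r-2 = 2*s+2" "r - 1 = s + 1" using s by simp_all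
    ultimately show ?thesis unfolding N_def f2_def f1_def F_def s by (simp add: ac_simps)
  qed
qed

lemma Hf_final:
  assumes r: "r \<ge> 1" and y0: "\<And>j. 0 \<le> y j" and y1: "\<And>j. y j \<le> 1"
  shows "\<bar>Hf y (2*r) 0\<bar> \<le> fact (2*r-2) * (\<Prod>j\<in>{1..<2*r}. y j ^ bexp j)"
proof -
  define m where "m = 2*r - 1"
  have m1: "m \<ge> 1" and mS: "2*r = Suc m" and mo: "odd m" using r unfolding m_def by auto
  have "Hf y (2*r) 0 = y m * Hf y m 1"
    unfolding mS Hf_rec[OF m1] by simp
  then have h1: "\<bar>Hf y (2*r) 0\<bar> = y m * \<bar>Hf y m 1\<bar>" by (simp add: abs_mult y0)
  have h2: "y m * \<bar>Hf y m 1\<bar> \<le> y m * (real (Nb (m-1) 1) * Pm y r m)"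
    by (intro mult_left_mono Hf_bound[OF y0 y1 m1]) (use mS y0 in auto)
  define P where "P = (\<Prod>j\<in>{1..<m}. y j ^ bexp j)"
  have h3: "Pm y r m = real (\<Prod>j\<in>{1..<m}. min j (2*r-j)) * P"
    unfolding Pm_def P_def by (simp add: prod.distrib)
  have h4: "(\<Prod>j\<in>{1..<m}. min j (2*r-j)) = fact r * fact (r-1)"
    unfolding m_def by (rule prod_min[OF r])
  have mm: "m - 1 = 2*r-2" unfolding m_def by simp
  have h5: "Nb (m-1) 1 * fact r * fact (r - 1) = (fact (2*r-2) :: nat)"
    unfolding mm by (rule comb_final[OF r])
  have bm: "bexp m = 1" using mo unfolding bexp_def by simp
  have h6: "(\<Prod>j\<in>{1..<2*r}. y j ^ bexp j) = P * y m"
    unfolding mS P_def using prod.atLeastLessThan_Suc[OF m1, of "\<lambda>j. y j ^ bexp j"] bm by simp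
  have "y m * (real (Nb (m-1) 1) * Pm y r m) = real (Nb (m-1) 1 * fact r * fact (r - 1)) * (P * y m)"
    unfolding h3 h4 by (simp add: algebra_simps)
  also have "\<dots> = fact (2*r-2) * (\<Prod>j\<in>{1..<2*r}. y j ^ bexp j)"
    unfolding h5 h6 by (simp add: of_nat_fact)
  finally show ?thesis using h1 h2 by simp
qed

lemma configs_Suc_sum:
  "(\<Sum>\<sigma>\<in>ising_configs (Suc n). g \<sigma>) = (\<Sum>\<sigma>\<in>ising_configs n. \<Sum>t\<in>{-1,1::int}. g (\<sigma>(Suc n := t)))"
proof -
  have e: "{1..Suc n} = insert (Suc n) {1..n}" by auto
  have nin: "Suc n \<notin> {1..n}" by simp
  have "(\<Sum>\<sigma>\<in>ising_configs (Suc n). g \<sigma>) =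
      (\<Sum>\<sigma>\<in>(\<lambda>(y, h). h(Suc n := y)) ` ({-1,1::int} \<times> ising_configs n). g \<sigma>)"
    unfolding ising_configs_def e PiE_insert_eq by simp
  also have "\<dots> = (\<Sum>p\<in>{-1,1::int} \<times> ising_configs n. g ((\<lambda>(y, h). h(Suc n := y)) p))"
    using sum.reindex[OF inj_combinator[OF nin, of "\<lambda>_. {-1,1::int}"]] unfolding ising_configs_def
    by simp
  also have "\<dots> = (\<Sum>t\<in>{-1,1::int}. \<Sum>\<sigma>\<in>ising_configs n. g (\<sigma>(Suc n := t)))"
    by (simp add: sum.cartesian_product case_prod_unfold)
  also have "\<dots> = (\<Sum>\<sigma>\<in>ising_configs n. \<Sum>t\<in>{-1,1::int}. g (\<sigma>(Suc n := t)))"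
    by (rule sum.swap)
  finally show ?thesis .
qed

lemma configs_val: "\<sigma> \<in> ising_configs n \<Longrightarrow> k \<in> {1..n} \<Longrightarrow> \<sigma> k \<in> {-1,1}"
  unfolding ising_configs_def by (auto simp: PiE_iff)

lemma finite_configs: "finite (ising_configs n)"
  unfolding ising_configs_def by (intro finite_PiE) auto

lemma weight_Suc:
  assumes "n \<ge> 1"
  shows "ising_weight \<beta> (Suc n) (\<sigma>(Suc n := t)) = ising_weight \<beta> n \<sigma> * exp (\<beta> * real_of_int (\<sigma> n * t))"
proof -
  have "(\<Sum>i = 1..<Suc n. real_of_int ((\<sigma>(Suc n := t)) i * (\<sigma>(Suc n := t)) (i + 1)))
      = (\<Sum>i = 1..<n. real_of_int ((\<sigma>(Suc n := t)) i * (\<sigma>(Suc n := t)) (i + 1)))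
        + real_of_int ((\<sigma>(Suc n := t)) n * (\<sigma>(Suc n := t)) (n + 1))"
    using assms by (simp add: sum.atLeastLessThan_Suc)
  also have "(\<Sum>i = 1..<n. real_of_int ((\<sigma>(Suc n := t)) i * (\<sigma>(Suc n := t)) (i + 1)))
      = (\<Sum>i = 1..<n. real_of_int (\<sigma> i * \<sigma> (i + 1)))"
    by (intro sum.cong) auto
  finally show ?thesis unfolding ising_weight_def by (simp add: distrib_left exp_add)
qed


definition Cs :: "(nat \<Rightarrow> nat) \<Rightarrow> nat \<Rightarrow> nat" where "Cs c k = (\<Sum>k'\<in>{1..k}. c k')"
definition Mn :: "nat \<Rightarrow> (nat \<Rightarrow> nat) \<Rightarrow> (nat \<Rightarrow> int) \<Rightarrow> real" where
  "Mn n c \<sigma> = (\<Prod>k\<in>{1..n}. real_of_int (\<sigma> k) ^ c k)"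
definition Xn :: "real \<Rightarrow> (nat \<Rightarrow> nat) \<Rightarrow> nat \<Rightarrow> real" where
  "Xn \<beta> c n = (\<Prod>k\<in>{1..<n}. tanh \<beta> ^ (if odd (Cs c k) then 1 else 0))"

lemma two_point_sum: "s \<in> {-1,1::int} \<Longrightarrow> (\<Sum>t\<in>{-1,1::int}. if t = s then f t else 0) = (f s :: real)"
  by auto

lemma exp_pair:
  assumes s: "s \<in> {-1,1::int}"
  shows "exp (\<beta> * real_of_int s) + (-1) ^ C * exp (\<beta> * real_of_int (- s))
     = real_of_int s ^ C * (2 * cosh \<beta>) * tanh \<beta> ^ (if odd C then 1 else 0)"
proof -
  have ch: "cosh \<beta> \<noteq> 0" using cosh_real_pos[of \<beta>] by simp
  have t: "2 * cosh \<beta> * tanh \<beta> = exp \<beta> - exp (- \<beta>)"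
    using ch unfolding tanh_def sinh_def by (simp add: field_simps)
  have c: "2 * cosh \<beta> = exp \<beta> + exp (- \<beta>)" unfolding cosh_def by simp
  show ?thesis
  proof (cases "even C")
    case True
    then show ?thesis using s c by auto
  next
    case False
    then show ?thesis using s t by (auto simp: algebra_simps)
  qed
qed

lemma S_formula:
  "n \<ge> 1 \<Longrightarrow> s \<in> {-1,1::int} \<Longrightarrow>
   (\<Sum>\<sigma>\<in>ising_configs n. if \<sigma> n = s then Mn n c \<sigma> * ising_weight \<beta> n \<sigma> else 0)
   = real_of_int s ^ Cs c n * (2 * cosh \<beta>) ^ (n-1) * Xn \<beta> c n"
proof (induction n arbitrary: s)
  case 0 then show ?case by simp
next
  case (Suc n)
  show ?case
  proof (cases "n = 0")
    case True
    have c0: "ising_configs 0 = {\<lambda>_. undefined}" unfolding ising_configs_def by simp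
    have w1: "ising_weight \<beta> (Suc 0) \<sigma> = 1" for \<sigma> unfolding ising_weight_def by simp
    show ?thesis unfolding True configs_Suc_sum c0
      using Suc.prems(2) by (auto simp: Mn_def Cs_def Xn_def w1)
  next
    case False
    then have n1: "n \<ge> 1" by simp
    define h where "h \<sigma> = Mn n c \<sigma> * ising_weight \<beta> n \<sigma>" for \<sigma>
    have Mn_upd: "Mn (Suc n) c (\<sigma>(Suc n := t)) = Mn n c \<sigma> * real_of_int t ^ c (Suc n)" for \<sigma> t
    proof -
      have "Mn (Suc n) c (\<sigma>(Suc n := t)) = (\<Prod>k\<in>{1..n}. real_of_int ((\<sigma>(Suc n := t)) k) ^ c k) * real_of_int t ^ c (Suc n)"
        unfolding Mn_def by (simp add: prod.nat_ivl_Suc')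
      also have "(\<Prod>k\<in>{1..n}. real_of_int ((\<sigma>(Suc n := t)) k) ^ c k) = Mn n c \<sigma>"
        unfolding Mn_def by (intro prod.cong) auto
      finally show ?thesis .
    qed
    have "(\<Sum>\<sigma>\<in>ising_configs (Suc n). if \<sigma> (Suc n) = s then Mn (Suc n) c \<sigma> * ising_weight \<beta> (Suc n) \<sigma> else 0)
        = (\<Sum>\<sigma>\<in>ising_configs n. \<Sum>t\<in>{-1,1::int}. if t = s then Mn (Suc n) c (\<sigma>(Suc n := t)) * ising_weight \<beta> (Suc n) (\<sigma>(Suc n := t)) else 0)"
      unfolding configs_Suc_sum by simp
    also have "\<dots> = (\<Sum>\<sigma>\<in>ising_configs n. Mn (Suc n) c (\<sigma>(Suc n := s)) * ising_weight \<beta> (Suc n) (\<sigma>(Suc n := s)))"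
      by (intro sum.cong refl two_point_sum Suc.prems(2))
    also have "\<dots> = (\<Sum>\<sigma>\<in>ising_configs n. real_of_int s ^ c (Suc n) * (h \<sigma> * exp (\<beta> * real_of_int (\<sigma> n * s))))"
      unfolding Mn_upd weight_Suc[OF n1] h_def by (simp add: algebra_simps)
    also have "\<dots> = real_of_int s ^ c (Suc n) * (\<Sum>\<sigma>\<in>ising_configs n. h \<sigma> * exp (\<beta> * real_of_int (\<sigma> n * s)))"
      by (simp add: sum_distrib_left)
    also have "(\<Sum>\<sigma>\<in>ising_configs n. h \<sigma> * exp (\<beta> * real_of_int (\<sigma> n * s)))
        = (\<Sum>\<sigma>\<in>ising_configs n. \<Sum>u\<in>{-1,1::int}. (if \<sigma> n = u then h \<sigma> else 0) * exp (\<beta> * real_of_int (u * s)))"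
    proof (intro sum.cong refl)
      fix \<sigma> assume "\<sigma> \<in> ising_configs n"
      then have "\<sigma> n \<in> {-1,1}" using configs_val n1 by auto
      then show "h \<sigma> * exp (\<beta> * real_of_int (\<sigma> n * s)) =
          (\<Sum>u\<in>{-1,1::int}. (if \<sigma> n = u then h \<sigma> else 0) * exp (\<beta> * real_of_int (u * s)))"
        by auto
    qed
    also have "\<dots> = (\<Sum>u\<in>{-1,1::int}. exp (\<beta> * real_of_int (u * s)) * (\<Sum>\<sigma>\<in>ising_configs n. if \<sigma> n = u then h \<sigma> else 0))"
      by (subst sum.swap) (simp add: sum_distrib_left mult.commute)
    also have "\<dots> = (\<Sum>u\<in>{-1,1::int}. exp (\<beta> * real_of_int (u * s)) * (real_of_int u ^ Cs c n * (2 * cosh \<beta>) ^ (n-1) * Xn \<beta> c n))"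
      unfolding h_def using Suc.IH[OF n1] by (intro sum.cong refl) auto
    also have "\<dots> = (exp (\<beta> * real_of_int s) + (-1) ^ Cs c n * exp (\<beta> * real_of_int (- s))) * ((2 * cosh \<beta>) ^ (n-1) * Xn \<beta> c n)"
      by (simp add: algebra_simps)
    also have "\<dots> = real_of_int s ^ Cs c n * (2 * cosh \<beta>) * tanh \<beta> ^ (if odd (Cs c n) then 1 else 0) * ((2 * cosh \<beta>) ^ (n-1) * Xn \<beta> c n)"
      unfolding exp_pair[OF Suc.prems(2)] ..
    finally have L: "(\<Sum>\<sigma>\<in>ising_configs (Suc n). if \<sigma> (Suc n) = s then Mn (Suc n) c \<sigma> * ising_weight \<beta> (Suc n) \<sigma> else 0)
       = real_of_int s ^ c (Suc n) * (real_of_int s ^ Cs c n * (2 * cosh \<beta>) * tanh \<beta> ^ (if odd (Cs c n) then 1 else 0) * ((2 * cosh \<beta>) ^ (n-1) * Xn \<beta> c n))" .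
    have CS: "Cs c (Suc n) = Cs c n + c (Suc n)" unfolding Cs_def by simp
    have XS: "Xn \<beta> c (Suc n) = Xn \<beta> c n * tanh \<beta> ^ (if odd (Cs c n) then 1 else 0)"
      unfolding Xn_def using n1 by (simp add: prod.atLeastLessThan_Suc)
    have KS: "(2 * cosh \<beta>) ^ (Suc n - 1) = (2 * cosh \<beta>) * (2 * cosh \<beta>) ^ (n-1)"
      using n1 by (cases n) auto
    show ?thesis unfolding L CS XS KS by (simp add: power_add algebra_simps)
  qed
qed


lemma total_sum:
  assumes n1: "n \<ge> 1"
  shows "(\<Sum>\<sigma>\<in>ising_configs n. Mn n c \<sigma> * ising_weight \<beta> n \<sigma>)
     = (1 + (-1) ^ Cs c n) * (2 * cosh \<beta>) ^ (n-1) * Xn \<beta> c n"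
proof -
  have "(\<Sum>\<sigma>\<in>ising_configs n. Mn n c \<sigma> * ising_weight \<beta> n \<sigma>)
      = (\<Sum>\<sigma>\<in>ising_configs n. \<Sum>u\<in>{-1,1::int}. if \<sigma> n = u then Mn n c \<sigma> * ising_weight \<beta> n \<sigma> else 0)"
  proof (intro sum.cong refl)
    fix \<sigma> assume "\<sigma> \<in> ising_configs n"
    then have "\<sigma> n \<in> {-1,1}" using configs_val n1 by auto
    then show "Mn n c \<sigma> * ising_weight \<beta> n \<sigma> =
        (\<Sum>u\<in>{-1,1::int}. if \<sigma> n = u then Mn n c \<sigma> * ising_weight \<beta> n \<sigma> else 0)" by auto
  qed
  also have "\<dots> = (\<Sum>u\<in>{-1,1::int}. \<Sum>\<sigma>\<in>ising_configs n. if \<sigma> n = u then Mn n c \<sigma> * ising_weight \<beta> n \<sigma> else 0)"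
    by (rule sum.swap)
  also have "\<dots> = (\<Sum>u\<in>{-1,1::int}. real_of_int u ^ Cs c n * (2 * cosh \<beta>) ^ (n-1) * Xn \<beta> c n)"
    using S_formula[OF n1] by (intro sum.cong refl) auto
  also have "\<dots> = (1 + (-1) ^ Cs c n) * (2 * cosh \<beta>) ^ (n-1) * Xn \<beta> c n"
    by (simp add: algebra_simps)
  finally show ?thesis .
qed

lemma moment:
  assumes n1: "n \<ge> 1" and f: "\<And>\<sigma>. \<sigma> \<in> ising_configs n \<Longrightarrow> f \<sigma> = Mn n c \<sigma>"
  shows "ising_expect \<beta> n f = (if even (Cs c n) then Xn \<beta> c n else 0)"
proof -
  have num: "(\<Sum>\<sigma>\<in>ising_configs n. f \<sigma> * ising_weight \<beta> n \<sigma>) = (1 + (-1) ^ Cs c n) * (2 * cosh \<beta>) ^ (n-1) * Xn \<beta> c n"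
    using total_sum[OF n1, of c \<beta>] f by (simp cong: sum.cong)
  have M0: "Mn n (\<lambda>_. 0) \<sigma> = 1" for \<sigma> unfolding Mn_def by simp
  have "ising_partition_fn \<beta> n = (\<Sum>\<sigma>\<in>ising_configs n. Mn n (\<lambda>_. 0) \<sigma> * ising_weight \<beta> n \<sigma>)"
    unfolding ising_partition_fn_def M0 by simp
  also have "\<dots> = 2 * (2 * cosh \<beta>) ^ (n-1)"
    unfolding total_sum[OF n1] by (simp add: Cs_def Xn_def)
  finally have Z: "ising_partition_fn \<beta> n = 2 * (2 * cosh \<beta>) ^ (n-1)" .
  have K: "(2 * cosh \<beta>) ^ (n-1) \<noteq> 0" using cosh_real_pos[of \<beta>] by simp
  show ?thesis unfolding ising_expect_def num Z using K by auto
qed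

definition cA :: "nat list \<Rightarrow> nat set \<Rightarrow> nat \<Rightarrow> nat" where
  "cA p A k = card {j\<in>A. p!j = k}"

lemma prod_block:
  assumes A: "A \<subseteq> {..<length p}" and rng: "\<forall>k\<in>set p. 1 \<le> k \<and> k \<le> n"
  shows "(\<Prod>j\<in>A. real_of_int (\<sigma> (p!j))) = Mn n (cA p A) \<sigma>"
proof -
  have fA: "finite A" using A finite_subset by blast
  have img: "(\<lambda>j. p!j) ` A \<subseteq> {1..n}" using A rng by (auto simp: subset_iff)
  have "(\<Prod>j\<in>A. real_of_int (\<sigma> (p!j))) = (\<Prod>k\<in>{1..n}. \<Prod>j\<in>{j\<in>A. p!j = k}. real_of_int (\<sigma> (p!j)))"
    by (rule prod.group[OF fA _ img, symmetric]) simp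
  also have "\<dots> = (\<Prod>k\<in>{1..n}. real_of_int (\<sigma> k) ^ cA p A k)"
  proof (intro prod.cong refl)
    fix k
    have "(\<Prod>j\<in>{j\<in>A. p!j = k}. real_of_int (\<sigma> (p!j))) = (\<Prod>j\<in>{j\<in>A. p!j = k}. real_of_int (\<sigma> k))"
      by (intro prod.cong) auto
    then show "(\<Prod>j\<in>{j\<in>A. p!j = k}. real_of_int (\<sigma> (p!j))) = real_of_int (\<sigma> k) ^ cA p A k"
      unfolding cA_def by simp
  qed
  finally show ?thesis unfolding Mn_def .
qed

lemma Cs_cA:
  assumes A: "A \<subseteq> {..<length p}" and rng: "\<forall>k\<in>set p. 1 \<le> k \<and> k \<le> n"
  shows "Cs (cA p A) k = card {j\<in>A. p!j \<le> k}"
proof -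
  have fA: "finite A" using A finite_subset by blast
  define S where "S = {j\<in>A. p!j \<le> k}"
  have fS: "finite S" unfolding S_def using fA by simp
  have img: "(\<lambda>j. p!j) ` S \<subseteq> {1..k}" using A rng unfolding S_def by (auto simp: subset_iff)
  have "card S = (\<Sum>j\<in>S. 1)" by simp
  also have "\<dots> = (\<Sum>k'\<in>{1..k}. \<Sum>j\<in>{j\<in>S. p!j = k'}. 1)"
    by (rule sum.group[OF fS _ img, symmetric]) simp
  also have "\<dots> = (\<Sum>k'\<in>{1..k}. cA p A k')"
  proof (intro sum.cong refl)
    fix k' assume "k' \<in> {1..k}"
    then have "{j\<in>S. p!j = k'} = {j\<in>A. p!j = k'}" unfolding S_def by auto
    then show "(\<Sum>j\<in>{j\<in>S. p!j = k'}. 1) = cA p A k'" unfolding cA_def by simp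
  qed
  finally show ?thesis unfolding Cs_def S_def by simp
qed

lemma D_interval:
  assumes A: "A \<subseteq> {..<length p}" and s: "sorted p" and j: "j \<le> length p"
    and lo: "j = 0 \<or> p!(j-1) \<le> k" and hi: "j = length p \<or> k < p!j"
  shows "{j'\<in>A. p!j' \<le> k} = A \<inter> {..<j}"
proof (intro set_eqI iffI)
  fix x assume x: "x \<in> {j'\<in>A. p!j' \<le> k}"
  show "x \<in> A \<inter> {..<j}"
  proof (rule ccontr)
    assume "x \<notin> A \<inter> {..<j}"
    then have "j \<le> x" using x by auto
    moreover have "x < length p" using x A by auto
    ultimately have "j < length p" "p!j \<le> p!x" using s by (auto simp: sorted_iff_nth_mono)
    then show False using hi x by auto
  qed
next
  fix x assume x: "x \<in> A \<inter> {..<j}"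
  then have "x \<le> j - 1" "j - 1 < length p" "j \<noteq> 0" using j by auto
  then have "p!x \<le> p!(j-1)" using s by (auto simp: sorted_iff_nth_mono)
  then show "x \<in> {j'\<in>A. p!j' \<le> k}" using x lo by auto
qed


lemma exp_prefix:
  assumes A: "A \<subseteq> {..<length p}" and s: "sorted p" and rng: "\<forall>k\<in>set p. 1 \<le> k \<and> k \<le> n"
  shows "m < length p \<Longrightarrow> (\<Sum>k\<in>{1..<p!m}. if odd (card {j\<in>A. p!j \<le> k}) then 1 else 0)
      = (\<Sum>j\<in>{1..<Suc m}. (p!j - p!(j-1)) * ind j A)"
proof (induction m)
  case 0
  have "(\<Sum>k\<in>{1..<p!0}. if odd (card {j\<in>A. p!j \<le> k}) then 1 else 0) = (\<Sum>k\<in>{1..<p!0}. (0::nat))"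
  proof (intro sum.cong refl)
    fix k assume "k \<in> {1..<p!0}"
    then have e: "{j\<in>A. p!j \<le> k} = A \<inter> {..<0}" by (intro D_interval[OF A s]) auto
    show "(if odd (card {j\<in>A. p!j \<le> k}) then 1 else 0) = (0::nat)" unfolding e by simp
  qed
  then show ?case by simp
next
  case (Suc m)
  have m: "m < length p" using Suc.prems by simp
  have "p!m \<in> set p" using m by simp
  then have pm1: "1 \<le> p!m" using rng by auto
  have pm2: "p!m \<le> p!(Suc m)" using s Suc.prems by (auto simp: sorted_iff_nth_mono)
  have "(\<Sum>k\<in>{1..<p!(Suc m)}. if odd (card {j\<in>A. p!j \<le> k}) then 1 else 0)
     = (\<Sum>k\<in>{1..<p!m}. if odd (card {j\<in>A. p!j \<le> k}) then 1 else 0)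
       + (\<Sum>k\<in>{p!m..<p!(Suc m)}. if odd (card {j\<in>A. p!j \<le> k}) then 1 else 0)"
    by (rule sum.atLeastLessThan_concat[OF pm1 pm2, symmetric])
  also have "(\<Sum>k\<in>{p!m..<p!(Suc m)}. if odd (card {j\<in>A. p!j \<le> k}) then 1 else 0)
     = (\<Sum>k\<in>{p!m..<p!(Suc m)}. ind (Suc m) A)"
  proof (intro sum.cong refl)
    fix k assume k: "k \<in> {p!m..<p!(Suc m)}"
    have "{j\<in>A. p!j \<le> k} = A \<inter> {..<Suc m}" by (rule D_interval[OF A s]) (use Suc.prems k in auto)
    then show "(if odd (card {j\<in>A. p!j \<le> k}) then 1 else 0) = ind (Suc m) A" unfolding ind_def by simp
  qed
  also have "\<dots> = (p!(Suc m) - p!(Suc m - 1)) * ind (Suc m) A" by simp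
  finally show ?case using Suc.IH[OF m] by (simp add: sum.atLeastLessThan_Suc)
qed

lemma exp_full:
  assumes A: "A \<subseteq> {..<length p}" and s: "sorted p" and rng: "\<forall>k\<in>set p. 1 \<le> k \<and> k \<le> n"
    and L: "length p \<ge> 1" and ev: "even (card A)"
  shows "(\<Sum>k\<in>{1..<n}. if odd (card {j\<in>A. p!j \<le> k}) then 1 else 0)
      = (\<Sum>j\<in>{1..<length p}. (p!j - p!(j-1)) * ind j A)"
proof -
  define l where "l = length p - 1"
  have l: "l < length p" "Suc l = length p" using L unfolding l_def by auto
  have "p!l \<in> set p" using l(1) by simp
  then have pl1: "1 \<le> p!l" and pl2: "p!l \<le> n" using rng by auto
  have "(\<Sum>k\<in>{1..<n}. if odd (card {j\<in>A. p!j \<le> k}) then 1 else 0)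
     = (\<Sum>k\<in>{1..<p!l}. if odd (card {j\<in>A. p!j \<le> k}) then 1 else 0)
       + (\<Sum>k\<in>{p!l..<n}. if odd (card {j\<in>A. p!j \<le> k}) then 1 else 0)"
    by (rule sum.atLeastLessThan_concat[OF pl1 pl2, symmetric])
  also have "(\<Sum>k\<in>{p!l..<n}. if odd (card {j\<in>A. p!j \<le> k}) then 1 else 0) = (\<Sum>k\<in>{p!l..<n}. (0::nat))"
  proof (intro sum.cong refl)
    fix k assume k: "k \<in> {p!l..<n}"
    have l3: "length p - 1 = l" using l by simp
    have "{j\<in>A. p!j \<le> k} = A \<inter> {..<length p}" by (rule D_interval[OF A s]) (use l3 k in auto)
    also have "\<dots> = A" using A by auto
    finally show "(if odd (card {j\<in>A. p!j \<le> k}) then 1 else 0) = (0::nat)" using ev by simp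
  qed
  also have "(\<Sum>k\<in>{1..<p!l}. if odd (card {j\<in>A. p!j \<le> k}) then 1 else 0)
      = (\<Sum>j\<in>{1..<Suc l}. (p!j - p!(j-1)) * ind j A)" by (rule exp_prefix[OF A s rng l(1)])
  finally show ?thesis using l by simp
qed

lemma block_moment:
  assumes A: "A \<subseteq> {..<length p}" and s: "sorted p" and rng: "\<forall>k\<in>set p. 1 \<le> k \<and> k \<le> n"
    and L: "length p \<ge> 1" and n1: "n \<ge> 1"
  shows "ising_expect \<beta> n (\<lambda>\<sigma>. \<Prod>j\<in>A. real_of_int (\<sigma> (p!j)))
    = (if even (card A) then (\<Prod>j\<in>{1..<length p}. (tanh \<beta> ^ (p!j - p!(j-1))) ^ ind j A) else 0)"
proof -
  have E: "ising_expect \<beta> n (\<lambda>\<sigma>. \<Prod>j\<in>A. real_of_int (\<sigma> (p!j)))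
      = (if even (Cs (cA p A) n) then Xn \<beta> (cA p A) n else 0)"
    by (rule moment[OF n1]) (rule prod_block[OF A rng])
  have C: "Cs (cA p A) n = card A"
  proof -
    have "p!x \<le> n" if "x \<in> A" for x
    proof -
      have "p!x \<in> set p" using that A by auto
      then show ?thesis using rng by auto
    qed
    then have "{j\<in>A. p!j \<le> n} = A" by auto
    then show ?thesis using Cs_cA[OF A rng] by simp
  qed
  show ?thesis
  proof (cases "even (card A)")
    case False then show ?thesis using E C by simp
  next
    case True
    have "Xn \<beta> (cA p A) n = (\<Prod>k\<in>{1..<n}. tanh \<beta> ^ (if odd (card {j\<in>A. p!j \<le> k}) then 1 else 0))"
      unfolding Xn_def Cs_cA[OF A rng] ..
    also have "\<dots> = tanh \<beta> ^ (\<Sum>k\<in>{1..<n}. if odd (card {j\<in>A. p!j \<le> k}) then 1 else 0)"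
      by (simp add: power_sum)
    also have "\<dots> = tanh \<beta> ^ (\<Sum>j\<in>{1..<length p}. (p!j - p!(j-1)) * ind j A)"
      unfolding exp_full[OF A s rng L True] ..
    also have "\<dots> = (\<Prod>j\<in>{1..<length p}. (tanh \<beta> ^ (p!j - p!(j-1))) ^ ind j A)"
      by (simp add: power_sum power_mult)
    finally show ?thesis using E C True by simp
  qed
qed

lemma exp_ident:
  assumes s: "sorted p" and L: "length p = 2*r"
  shows "1 \<le> r' \<Longrightarrow> r' \<le> r \<Longrightarrow> (\<Sum>j\<in>{1..<2*r'}. (p!j - p!(j-1)) * bexp j)
     = p!(2*r'-1) + (\<Sum>k = 1..<r'. p!(2*k) - p!(2*k-1)) - p!0"
proof (induction r' rule: nat_induct_at_least)
  case base
  have "{1..<2*1::nat} = {1}" by auto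
  then show ?case by (simp add: bexp_def)
next
  case (Suc q)
  have q1: "1 \<le> q" using Suc.hyps by simp
  have mono: "\<And>a b. a \<le> b \<Longrightarrow> b < length p \<Longrightarrow> p!a \<le> p!b" using s by (simp add: sorted_iff_nth_mono)
  have z: "p!0 \<le> p!(2*q-1)" using mono[of 0 "2*q-1"] Suc.prems L by simp
  have ab: "p!(2*q-1) \<le> p!(2*q)" using mono[of "2*q-1" "2*q"] Suc.prems L by simp
  have bc: "p!(2*q) \<le> p!(2*q+1)" using mono[of "2*q" "2*q+1"] Suc.prems L by simp
  have IH: "(\<Sum>j\<in>{1..<2*q}. (p!j - p!(j-1)) * bexp j) = p!(2*q-1) + (\<Sum>k = 1..<q. p!(2*k) - p!(2*k-1)) - p!0"
    using Suc.IH Suc.prems by simp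
  have e1: "2 * Suc q = Suc (Suc (2*q))" by simp
  have b1: "bexp (2*q) = 2" and b2: "bexp (Suc (2*q)) = 1" unfolding bexp_def by simp_all
  define f where "f j = (p!j - p!(j-1)) * bexp j" for j
  define g where "g k = p!(2*k) - p!(2*k-1)" for k
  have s1: "(\<Sum>j\<in>{1..<Suc (Suc (2*q))}. f j) = (\<Sum>j\<in>{1..<2*q}. f j) + f (2*q) + f (Suc (2*q))"
    using sum.atLeastLessThan_Suc[of 1 "Suc (2*q)" f] sum.atLeastLessThan_Suc[of 1 "2*q" f] q1 by simp
  have s2: "(\<Sum>k = 1..<Suc q. g k) = (\<Sum>k = 1..<q. g k) + g q"
    using sum.atLeastLessThan_Suc[of 1 q g] q1 by simp
  have f1: "f (2*q) = (p!(2*q) - p!(2*q-1)) * 2" unfolding f_def b1 ..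
  have f2: "f (Suc (2*q)) = p!(Suc (2*q)) - p!(2*q)" unfolding f_def b2 by simp
  have e3: "2 * Suc q - 1 = Suc (2*q)" by simp
  have IH': "(\<Sum>j\<in>{1..<2*q}. f j) = p!(2*q-1) + (\<Sum>k = 1..<q. g k) - p!0"
    unfolding f_def g_def by (rule IH)
  have "(\<Sum>j\<in>{1..<2 * Suc q}. f j) = p!(2 * Suc q - 1) + (\<Sum>k = 1..<Suc q. g k) - p!0"
  proof -
    have gq: "g q = p!(2*q) - p!(2*q-1)" unfolding g_def ..
    show ?thesis unfolding e1 s1 s2 f1 f2 IH' e3 gq using z ab bc by simp
  qed
  then show ?case unfolding f_def g_def .
qed


lemma prod_if_zero:
  assumes "finite Q"
  shows "(\<Prod>A\<in>Q. if ind L A = 0 then P A else (0::real)) = (if oc L Q = 0 then (\<Prod>A\<in>Q. P A) else 0)"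
proof (cases "oc L Q = 0")
  case True
  then have "\<forall>A\<in>Q. ind L A = 0" using assms unfolding oc_def by simp
  then show ?thesis using True by simp
next
  case False
  then obtain A where "A \<in> Q" "ind L A \<noteq> 0" using assms unfolding oc_def by auto
  then show ?thesis using False assms by (auto intro!: prod_zero bexI[of _ A])
qed

lemma cumulant_eq_Hf:
  assumes s: "sorted i" and rng: "\<forall>k\<in>set i. 1 \<le> k \<and> k \<le> n" and L: "length i \<ge> 1" and n1: "n \<ge> 1"
  shows "joint_cumulant (ising_expect \<beta> n) (map (\<lambda>k \<sigma>. real_of_int (\<sigma> k)) i)
       = Hf (\<lambda>j. tanh \<beta> ^ (i!j - i!(j-1))) (length i) 0"
proof -
  define y where "y j = tanh \<beta> ^ (i!j - i!(j-1))" for j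
  define Xs where "Xs = map (\<lambda>k \<sigma>. real_of_int (\<sigma> k)) i"
  have lX: "length Xs = length i" unfolding Xs_def by simp
  have e0: "{0..<length i} = {..<length i}" by auto
  have tm: "(-1) ^ (card Q - 1) * fact (card Q - 1) * (\<Prod>A\<in>Q. ising_expect \<beta> n (\<lambda>\<omega>. \<Prod>j\<in>A. (Xs ! j) \<omega>))
      = (if oc (length i) Q = 0 then mu Q * Wt y (length i) Q else 0)"
    if P: "partition_on {..<length i} Q" for Q
  proof -
    note pf = part_facts[OF P]
    have blk: "ising_expect \<beta> n (\<lambda>\<omega>. \<Prod>j\<in>A. (Xs ! j) \<omega>)
        = (if ind (length i) A = 0 then (\<Prod>j\<in>{1..<length i}. y j ^ ind j A) else 0)" if A: "A \<in> Q" for A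
    proof -
      have sub: "A \<subseteq> {..<length i}" using pf(2)[OF A] .
      have "(\<lambda>\<omega>. \<Prod>j\<in>A. (Xs ! j) \<omega>) = (\<lambda>\<omega>. \<Prod>j\<in>A. real_of_int (\<omega> (i!j)))"
        using sub unfolding Xs_def by (intro ext prod.cong) auto
      then have "ising_expect \<beta> n (\<lambda>\<omega>. \<Prod>j\<in>A. (Xs ! j) \<omega>)
        = (if even (card A) then (\<Prod>j\<in>{1..<length i}. (tanh \<beta> ^ (i!j - i!(j-1))) ^ ind j A) else 0)"
        using block_moment[OF sub s rng L n1, of \<beta>] by simp
      moreover have "ind (length i) A = (if odd (card A) then 1 else 0)" by (rule ind_sub[OF sub]) simp
      ultimately show ?thesis unfolding y_def by simp
    qed
    have "(\<Prod>A\<in>Q. ising_expect \<beta> n (\<lambda>\<omega>. \<Prod>j\<in>A. (Xs ! j) \<omega>))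
        = (\<Prod>A\<in>Q. if ind (length i) A = 0 then (\<Prod>j\<in>{1..<length i}. y j ^ ind j A) else 0)"
      using blk by (rule prod.cong[OF refl])
    also have "\<dots> = (if oc (length i) Q = 0 then (\<Prod>A\<in>Q. \<Prod>j\<in>{1..<length i}. y j ^ ind j A) else 0)"
      by (rule prod_if_zero[OF pf(1)])
    also have "(\<Prod>A\<in>Q. \<Prod>j\<in>{1..<length i}. y j ^ ind j A) = Wt y (length i) Q"
      unfolding Wt_def oc_def by (subst prod.swap) (simp add: power_sum)
    finally show ?thesis unfolding mu_def by simp
  qed
  have "joint_cumulant (ising_expect \<beta> n) Xs
      = (\<Sum>Q\<in>{Q. partition_on {..<length i} Q}. if oc (length i) Q = 0 then mu Q * Wt y (length i) Q else 0)"
    unfolding joint_cumulant_def lX e0 using tm by (intro sum.cong refl) auto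
  then show ?thesis unfolding Xs_def Hf_def y_def .
qed

theorem mainTheorem15:
  fixes \<beta> :: real and n r :: nat and i :: "nat list"
  assumes "\<beta> > 0" and "r \<ge> 1" and "length i = 2 * r" and "sorted i"
    and "\<forall>k\<in>set i. 1 \<le> k \<and> k \<le> n"
  shows "\<bar>joint_cumulant (ising_expect \<beta> n) (map (\<lambda>k \<sigma>. real_of_int (\<sigma> k)) i)\<bar>
         \<le> fact (2 * r - 2) *
           tanh \<beta> ^ (i ! (2 * r - 1) + (\<Sum>k = 1..<r. i ! (2 * k) - i ! (2 * k - 1)) - i ! 0)"
proof -
  note b = assms(1) and r = assms(2) and len = assms(3) and s = assms(4) and rng = assms(5)
  have L: "length i \<ge> 1" using len r by simp
  have "i!0 \<in> set i" using L by (intro nth_mem) linarith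
  then have n1: "n \<ge> 1" using rng by auto
  define x where "x = tanh \<beta>"
  have x0: "0 \<le> x" unfolding x_def using tanh_real_pos_iff[of \<beta>] b by simp
  have x1: "x \<le> 1" unfolding x_def using tanh_real_lt_1[of \<beta>] by simp
  define y where "y j = x ^ (i!j - i!(j-1))" for j
  have y0: "\<And>j. 0 \<le> y j" unfolding y_def using x0 by simp
  have y1: "\<And>j. y j \<le> 1" unfolding y_def using x0 x1 by (simp add: power_le_one)
  have "joint_cumulant (ising_expect \<beta> n) (map (\<lambda>k \<sigma>. real_of_int (\<sigma> k)) i) = Hf y (2*r) 0"
    using cumulant_eq_Hf[OF s rng L n1, of \<beta>] unfolding len y_def x_def .
  moreover have "\<bar>Hf y (2*r) 0\<bar> \<le> fact (2*r-2) * (\<Prod>j\<in>{1..<2*r}. y j ^ bexp j)"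
    by (rule Hf_final[OF r y0 y1])
  moreover have "(\<Prod>j\<in>{1..<2*r}. y j ^ bexp j) = x ^ (\<Sum>j\<in>{1..<2*r}. (i!j - i!(j-1)) * bexp j)"
    unfolding y_def by (simp add: power_sum power_mult)
  moreover have "(\<Sum>j\<in>{1..<2*r}. (i!j - i!(j-1)) * bexp j)
     = i ! (2 * r - 1) + (\<Sum>k = 1..<r. i ! (2 * k) - i ! (2 * k - 1)) - i ! 0"
    by (rule exp_ident[OF s len r order.refl])
  ultimately show ?thesis unfolding x_def by simp
qed

end
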